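(* Let $X$ be a complete orthomodular lattice. Then the unital involutive quantale $\mathrm{Lin}(X)$ (multiplication = composition, unit = identity map, pointwise joins, involution $s\mapsto s^\star$), equipped with the endomap $[-]\colon\mathrm{Lin}(X)\to\mathrm{Lin}(X)$ given by $[s]=\pi_{s^\star(1)^\perp}$, is a Foulis quantale. In particular $[\mathrm{id}_X]$ is the zero map, and for $s,t\in\mathrm{Lin}(X)$ we have $s\circ t=0$ iff $t=[s]\circ r$ for some $r\in\mathrm{Lin}(X)$.
   Context: An ortholattice is a bounded lattice with an involutive order-reversing map $x\mapsto x^\perp$ with $x\wedge x^\perp=0$; it is orthomodular if $x\le y$ implies $y=x\vee(x^\perp\wedge y)$. Write $x\perp y$ iff $x\le y^\perp$. A map $f\colon X\to X$ on a complete orthomodular lattice is linear if there is $h$ with $f(x)\perp y\iff x\perp h(y)$ for all $x,y$; such $h$ is unique, denoted $f^\star$; $\mathrm{Lin}(X)$ is the set of linear maps $X\to X$. For $a\in X$ the Sasaki projection is $\pi_a(y)=a\wedge(a^\perp\vee y)$. A quantale is a complete lattice with associative multiplication distributing over arbitrary joins on both sides; unital if it has a two-sided unit $e$; involutive if equipped with a join-preserving semigroup involution $*$. A Foulis quantale is a unital involutive quantale $Q$ with an endomap $[-]\colon Q\to Q$ such that: (a) $[s]\cdot[s]=[s]=[s]^*$ for all $s$; (b) $[e]=0$; (c) for all $s,x\in Q$: $s\cdot x=0$ iff there exists $y\in Q$ with $x=[s]\cdot y$. *)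

theory Defs
  imports Main
begin

text \<open>A complete orthomodular lattice: the underlying complete lattice is the type
  'a (class complete_lattice, giving bot = 0 and top = 1), together with an
  orthocomplementation oc.\<close>

definition ortholattice :: "('a::complete_lattice \<Rightarrow> 'a) \<Rightarrow> bool" where
  "ortholattice oc \<longleftrightarrow>
     (\<forall>x. oc (oc x) = x) \<and>
     (\<forall>x y. x \<le> y \<longrightarrow> oc y \<le> oc x) \<and>
     (\<forall>x. inf x (oc x) = bot)"

definition complete_oml :: "('a::complete_lattice \<Rightarrow> 'a) \<Rightarrow> bool" where
  "complete_oml oc \<longleftrightarrow> ortholattice oc \<and>
     (\<forall>x y. x \<le> y \<longrightarrow> y = sup x (inf (oc x) y))"

definition orth :: "('a::complete_lattice \<Rightarrow> 'a) \<Rightarrow> 'a \<Rightarrow> 'a \<Rightarrow> bool" where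
  "orth oc x y \<longleftrightarrow> x \<le> oc y"

definition is_adjoint :: "('a::complete_lattice \<Rightarrow> 'a) \<Rightarrow> ('a \<Rightarrow> 'a) \<Rightarrow> ('a \<Rightarrow> 'a) \<Rightarrow> bool" where
  "is_adjoint oc f h \<longleftrightarrow> (\<forall>x y. orth oc (f x) y \<longleftrightarrow> orth oc x (h y))"

definition Lin :: "('a::complete_lattice \<Rightarrow> 'a) \<Rightarrow> ('a \<Rightarrow> 'a) set" where
  "Lin oc = {f. \<exists>h. is_adjoint oc f h}"

definition lstar :: "('a::complete_lattice \<Rightarrow> 'a) \<Rightarrow> ('a \<Rightarrow> 'a) \<Rightarrow> ('a \<Rightarrow> 'a)" where
  "lstar oc f = (THE h. is_adjoint oc f h)"

definition sasaki :: "('a::complete_lattice \<Rightarrow> 'a) \<Rightarrow> 'a \<Rightarrow> 'a \<Rightarrow> 'a" where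
  "sasaki oc a y = inf a (sup (oc a) y)"

definition foulis_br :: "('a::complete_lattice \<Rightarrow> 'a) \<Rightarrow> ('a \<Rightarrow> 'a) \<Rightarrow> ('a \<Rightarrow> 'a)" where
  "foulis_br oc s = sasaki oc (oc (lstar oc s top))"

definition pw_le :: "('a::complete_lattice \<Rightarrow> 'a) \<Rightarrow> ('a \<Rightarrow> 'a) \<Rightarrow> bool" where
  "pw_le f g \<longleftrightarrow> (\<forall>x. f x \<le> g x)"

definition is_lub :: "('q \<Rightarrow> 'q \<Rightarrow> bool) \<Rightarrow> 'q set \<Rightarrow> 'q set \<Rightarrow> 'q \<Rightarrow> bool" where
  "is_lub le Q S s \<longleftrightarrow> s \<in> Q \<and> (\<forall>a\<in>S. le a s) \<and> (\<forall>b\<in>Q. (\<forall>a\<in>S. le a b) \<longrightarrow> le s b)"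

definition complete_lattice_on :: "'q set \<Rightarrow> ('q \<Rightarrow> 'q \<Rightarrow> bool) \<Rightarrow> bool" where
  "complete_lattice_on Q le \<longleftrightarrow>
     (\<forall>a\<in>Q. le a a) \<and>
     (\<forall>a\<in>Q. \<forall>b\<in>Q. le a b \<and> le b a \<longrightarrow> a = b) \<and>
     (\<forall>a\<in>Q. \<forall>b\<in>Q. \<forall>c\<in>Q. le a b \<and> le b c \<longrightarrow> le a c) \<and>
     (\<forall>S\<subseteq>Q. \<exists>s. is_lub le Q S s)"

definition quantale_on :: "'q set \<Rightarrow> ('q \<Rightarrow> 'q \<Rightarrow> bool) \<Rightarrow> ('q \<Rightarrow> 'q \<Rightarrow> 'q) \<Rightarrow> bool" where
  "quantale_on Q le m \<longleftrightarrow>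
     complete_lattice_on Q le \<and>
     (\<forall>a\<in>Q. \<forall>b\<in>Q. m a b \<in> Q) \<and>
     (\<forall>a\<in>Q. \<forall>b\<in>Q. \<forall>c\<in>Q. m (m a b) c = m a (m b c)) \<and>
     (\<forall>a\<in>Q. \<forall>S\<subseteq>Q. \<forall>s. is_lub le Q S s \<longrightarrow>
        is_lub le Q ((\<lambda>x. m a x) ` S) (m a s) \<and> is_lub le Q ((\<lambda>x. m x a) ` S) (m s a))"

definition unital_involutive_quantale_on ::
  "'q set \<Rightarrow> ('q \<Rightarrow> 'q \<Rightarrow> bool) \<Rightarrow> ('q \<Rightarrow> 'q \<Rightarrow> 'q) \<Rightarrow> 'q \<Rightarrow> ('q \<Rightarrow> 'q) \<Rightarrow> bool" where
  "unital_involutive_quantale_on Q le m e iv \<longleftrightarrow>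
     quantale_on Q le m \<and>
     e \<in> Q \<and> (\<forall>a\<in>Q. m e a = a \<and> m a e = a) \<and>
     (\<forall>a\<in>Q. iv a \<in> Q) \<and>
     (\<forall>a\<in>Q. iv (iv a) = a) \<and>
     (\<forall>a\<in>Q. \<forall>b\<in>Q. iv (m a b) = m (iv b) (iv a)) \<and>
     (\<forall>S\<subseteq>Q. \<forall>s. is_lub le Q S s \<longrightarrow> is_lub le Q (iv ` S) (iv s))"

text \<open>Zero of the quantale = least element = join of the empty set.\<close>
definition foulis_quantale_on ::
  "'q set \<Rightarrow> ('q \<Rightarrow> 'q \<Rightarrow> bool) \<Rightarrow> ('q \<Rightarrow> 'q \<Rightarrow> 'q) \<Rightarrow> 'q \<Rightarrow> ('q \<Rightarrow> 'q) \<Rightarrow> ('q \<Rightarrow> 'q) \<Rightarrow> bool" where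
  "foulis_quantale_on Q le m e iv br \<longleftrightarrow>
     unital_involutive_quantale_on Q le m e iv \<and>
     (\<forall>s\<in>Q. br s \<in> Q) \<and>
     (\<forall>s\<in>Q. m (br s) (br s) = br s \<and> iv (br s) = br s) \<and>
     is_lub le Q {} (br e) \<and>
     (\<forall>s\<in>Q. \<forall>x\<in>Q. is_lub le Q {} (m s x) \<longleftrightarrow> (\<exists>y\<in>Q. x = m (br s) y))"

end

theory Submission
  imports Defs
begin

locale cOML =
  fixes oc :: "'a::complete_lattice \<Rightarrow> 'a"
  assumes oml: "complete_oml oc"
begin

lemma invol[simp]: "oc (oc x) = x"
  using oml unfolding complete_oml_def ortholattice_def by blast

lemma anti: "x \<le> y \<Longrightarrow> oc y \<le> oc x"
  using oml unfolding complete_oml_def ortholattice_def by blast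

lemma compl_inf[simp]: "inf x (oc x) = bot"
  using oml unfolding complete_oml_def ortholattice_def by blast

lemma omlaw: "x \<le> y \<Longrightarrow> y = sup x (inf (oc x) y)"
  using oml unfolding complete_oml_def by blast

lemma oc_le_iff: "oc x \<le> oc y \<longleftrightarrow> y \<le> x"
  by (metis anti invol)

lemma orth_sym: "x \<le> oc y \<longleftrightarrow> y \<le> oc x"
  by (metis anti invol)

lemma oc_sup: "oc (sup x y) = inf (oc x) (oc y)"
proof (rule antisym)
  show "oc (sup x y) \<le> inf (oc x) (oc y)" by (simp add: anti)
  have "sup x y \<le> oc (inf (oc x) (oc y))"
    by (metis anti inf_le1 inf_le2 invol sup_least)
  then show "inf (oc x) (oc y) \<le> oc (sup x y)" using orth_sym by blast
qed

lemma oc_inf: "oc (inf x y) = sup (oc x) (oc y)"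
  by (metis oc_sup invol)

lemma oc_top[simp]: "oc top = bot"
  by (metis compl_inf inf_top_left)

lemma oc_bot[simp]: "oc bot = top"
  by (metis oc_top invol)

lemma omlaw_dual: "x \<le> y \<Longrightarrow> x = inf y (sup (oc y) x)"
proof -
  assume "x \<le> y"
  then have "oc y \<le> oc x" by (rule anti)
  then have "oc x = sup (oc y) (inf y (oc x))" using omlaw[of "oc y" "oc x"] by simp
  then have "oc (oc x) = oc (sup (oc y) (inf y (oc x)))" by simp
  then show ?thesis by (simp add: oc_sup oc_inf)
qed

lemma adj_unique: "is_adjoint oc f h \<Longrightarrow> is_adjoint oc f h' \<Longrightarrow> h = h'"
proof (rule ext)
  fix y assume a: "is_adjoint oc f h" "is_adjoint oc f h'"
  have "\<And>x. x \<le> oc (h y) \<longleftrightarrow> x \<le> oc (h' y)"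
    using a unfolding is_adjoint_def orth_def by blast
  then have "oc (h y) = oc (h' y)" by (meson antisym order_refl)
  then show "h y = h' y" by (metis invol)
qed

lemma lstar_eq: "is_adjoint oc f h \<Longrightarrow> lstar oc f = h"
  unfolding lstar_def using adj_unique by blast

lemma Lin_adj: "f \<in> Lin oc \<Longrightarrow> is_adjoint oc f (lstar oc f)"
  unfolding Lin_def using lstar_eq by blast

lemma adj_sym: "is_adjoint oc f h \<Longrightarrow> is_adjoint oc h f"
  unfolding is_adjoint_def orth_def using orth_sym by blast

lemma lstar_Lin: "f \<in> Lin oc \<Longrightarrow> lstar oc f \<in> Lin oc"
  using Lin_adj adj_sym unfolding Lin_def by blast

lemma lstar_lstar: "f \<in> Lin oc \<Longrightarrow> lstar oc (lstar oc f) = f"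
  using Lin_adj adj_sym lstar_eq by blast

lemma Lin_res: "f \<in> Lin oc \<Longrightarrow> f x \<le> z \<longleftrightarrow> x \<le> oc (lstar oc f (oc z))"
  using Lin_adj[of f] unfolding is_adjoint_def orth_def by (metis invol)

lemma Lin_mono: "f \<in> Lin oc \<Longrightarrow> x \<le> y \<Longrightarrow> f x \<le> f y"
  using Lin_res by (meson order_refl order_trans)

lemma Lin_Sup: "f \<in> Lin oc \<Longrightarrow> f (Sup A) = (SUP a\<in>A. f a)"
proof (rule antisym)
  assume f: "f \<in> Lin oc"
  have "Sup A \<le> oc (lstar oc f (oc (SUP a\<in>A. f a)))"
  proof (rule Sup_least)
    fix a assume "a \<in> A"
    then have "f a \<le> (SUP a\<in>A. f a)" by (rule SUP_upper)
    then show "a \<le> oc (lstar oc f (oc (SUP a\<in>A. f a)))" using Lin_res f by blast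
  qed
  then show "f (Sup A) \<le> (SUP a\<in>A. f a)" using Lin_res f by blast
  show "(SUP a\<in>A. f a) \<le> f (Sup A)"
    by (rule SUP_least) (simp add: Lin_mono[OF f] Sup_upper)
qed

lemma Lin_bot: "f \<in> Lin oc \<Longrightarrow> f bot = bot"
  using Lin_Sup[of f "{}"] by simp

lemma adj_comp: "is_adjoint oc f h \<Longrightarrow> is_adjoint oc g k \<Longrightarrow> is_adjoint oc (f \<circ> g) (k \<circ> h)"
  unfolding is_adjoint_def by simp

lemma Lin_comp: "f \<in> Lin oc \<Longrightarrow> g \<in> Lin oc \<Longrightarrow> f \<circ> g \<in> Lin oc"
  unfolding Lin_def using adj_comp by blast

lemma lstar_comp: "f \<in> Lin oc \<Longrightarrow> g \<in> Lin oc \<Longrightarrow> lstar oc (f \<circ> g) = lstar oc g \<circ> lstar oc f"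
  using adj_comp Lin_adj lstar_eq by blast

lemma adj_id: "is_adjoint oc id id"
  unfolding is_adjoint_def by simp

lemma id_Lin: "id \<in> Lin oc"
  unfolding Lin_def using adj_id by blast

lemma lstar_id: "lstar oc id = id"
  using adj_id lstar_eq by blast

definition psup :: "('a \<Rightarrow> 'a) set \<Rightarrow> 'a \<Rightarrow> 'a" where
  "psup S = (\<lambda>x. SUP f\<in>S. f x)"

lemma adj_psup_pt:
  assumes S: "S \<subseteq> Lin oc"
  shows "((SUP f\<in>S. f x) \<le> oc y) \<longleftrightarrow> (x \<le> oc (SUP f\<in>lstar oc ` S. f y))"
proof -
  have "(SUP f\<in>S. f x) \<le> oc y \<longleftrightarrow> (\<forall>f\<in>S. f x \<le> oc y)" by (simp add: SUP_le_iff)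
  also have "\<dots> \<longleftrightarrow> (\<forall>f\<in>S. x \<le> oc (lstar oc f y))"
    using S Lin_adj unfolding is_adjoint_def orth_def by blast
  also have "\<dots> \<longleftrightarrow> (\<forall>f\<in>S. lstar oc f y \<le> oc x)" using orth_sym by blast
  also have "\<dots> \<longleftrightarrow> (SUP f\<in>S. lstar oc f y) \<le> oc x" by (simp add: SUP_le_iff)
  also have "\<dots> \<longleftrightarrow> x \<le> oc (SUP f\<in>lstar oc ` S. f y)"
    unfolding image_image by (rule orth_sym)
  finally show ?thesis .
qed

lemma adj_psup:
  assumes S: "S \<subseteq> Lin oc"
  shows "is_adjoint oc (psup S) (psup (lstar oc ` S))"
  unfolding is_adjoint_def orth_def psup_def by (intro allI adj_psup_pt[OF S])

lemma psup_Lin: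
  assumes "S \<subseteq> Lin oc" shows "psup S \<in> Lin oc"
  unfolding Lin_def by (rule CollectI, rule exI, rule adj_psup[OF assms])

lemma lstar_psup:
  assumes "S \<subseteq> Lin oc" shows "lstar oc (psup S) = psup (lstar oc ` S)"
  by (rule lstar_eq[OF adj_psup[OF assms]])

lemma psup_upper: "f \<in> S \<Longrightarrow> pw_le f (psup S)"
  unfolding pw_le_def psup_def by (metis SUP_upper)

lemma psup_least: "\<forall>f\<in>S. pw_le f b \<Longrightarrow> pw_le (psup S) b"
  unfolding pw_le_def psup_def by (metis SUP_least)

lemma pw_antisym: "pw_le f g \<Longrightarrow> pw_le g f \<Longrightarrow> f = g"
  unfolding pw_le_def by (rule ext) (metis antisym)

lemma is_lub_iff:
  assumes S: "S \<subseteq> Lin oc"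
  shows "is_lub pw_le (Lin oc) S s \<longleftrightarrow> s = psup S"
proof
  assume l: "is_lub pw_le (Lin oc) S s"
  have l2: "\<forall>a\<in>S. pw_le a s" and l3: "\<forall>b\<in>Lin oc. (\<forall>a\<in>S. pw_le a b) \<longrightarrow> pw_le s b"
    using l unfolding is_lub_def by simp_all
  have "pw_le s (psup S)"
    by (rule l3[rule_format, OF psup_Lin[OF S]]) (erule psup_upper)
  moreover have "pw_le (psup S) s" by (rule psup_least[OF l2])
  ultimately show "s = psup S" by (rule pw_antisym)
next
  assume s: "s = psup S"
  show "is_lub pw_le (Lin oc) S s"
    unfolding is_lub_def s
  proof (intro conjI ballI impI)
    show "psup S \<in> Lin oc" by (rule psup_Lin[OF S])
  next
    fix a assume "a \<in> S" then show "pw_le a (psup S)" by (rule psup_upper)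
  next
    fix b assume "\<forall>a\<in>S. pw_le a b" then show "pw_le (psup S) b" by (rule psup_least)
  qed
qed

lemma sasaki_res: "sasaki oc a x \<le> z \<longleftrightarrow> x \<le> sup (oc a) (inf a z)"
proof
  assume h: "sasaki oc a x \<le> z"
  have "oc a \<le> sup (oc a) x" by simp
  then have e: "sup (oc a) x = sup (oc a) (inf a (sup (oc a) x))"
    using omlaw[of "oc a" "sup (oc a) x"] by simp
  have "inf a (sup (oc a) x) \<le> inf a z" using h unfolding sasaki_def by simp
  then have "sup (oc a) (inf a (sup (oc a) x)) \<le> sup (oc a) (inf a z)"
    using sup_mono by blast
  then have "sup (oc a) x \<le> sup (oc a) (inf a z)" using e by simp
  then show "x \<le> sup (oc a) (inf a z)" by simp
next
  assume h: "x \<le> sup (oc a) (inf a z)"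
  have "sasaki oc a x \<le> inf a (sup (oc a) (inf a z))"
    unfolding sasaki_def using h
    by (meson inf_mono order_refl sup.cobounded1 sup_least)
  also have "\<dots> = inf a z" using omlaw_dual[of "inf a z" a] by simp
  finally show "sasaki oc a x \<le> z" by simp
qed

lemma sasaki_adj: "is_adjoint oc (sasaki oc a) (sasaki oc a)"
proof -
  have "\<And>y. oc (sasaki oc a y) = sup (oc a) (inf a (oc y))"
    unfolding sasaki_def by (simp add: oc_inf oc_sup)
  then show ?thesis unfolding is_adjoint_def orth_def using sasaki_res by simp
qed

lemma sasaki_Lin: "sasaki oc a \<in> Lin oc"
  unfolding Lin_def using sasaki_adj by blast

lemma sasaki_le: "sasaki oc a x \<le> a"
  unfolding sasaki_def by simp

lemma sasaki_fix: "x \<le> a \<Longrightarrow> sasaki oc a x = x"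
  unfolding sasaki_def using omlaw_dual by metis

lemma sasaki_idem: "sasaki oc a \<circ> sasaki oc a = sasaki oc a"
  by (rule ext) (simp add: sasaki_fix sasaki_le)

lemma kernel: "s \<in> Lin oc \<Longrightarrow> s z = bot \<longleftrightarrow> z \<le> oc (lstar oc s top)"
  using Lin_adj[of s] unfolding is_adjoint_def orth_def
  by (metis oc_top bot_unique bot.extremum)

lemma zero_Lin: "(\<lambda>_. bot) \<in> Lin oc"
  using psup_Lin[of "{}"] unfolding psup_def by simp

lemma lub_empty: "z \<in> Lin oc \<Longrightarrow> is_lub pw_le (Lin oc) {} z \<longleftrightarrow> z = (\<lambda>_. bot)"
  using is_lub_iff[of "{}" z] unfolding psup_def by simp

lemma cond_c: "s \<in> Lin oc \<Longrightarrow> t \<in> Lin oc \<Longrightarrow>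
   s \<circ> t = (\<lambda>_. bot) \<longleftrightarrow> (\<exists>r\<in>Lin oc. t = foulis_br oc s \<circ> r)"
proof
  assume s: "s \<in> Lin oc" and t: "t \<in> Lin oc" and z: "s \<circ> t = (\<lambda>_. bot)"
  have "\<And>w. t w \<le> oc (lstar oc s top)"
  proof -
    fix w
    have "s (t w) = bot" using z by (simp add: fun_eq_iff)
    then show "t w \<le> oc (lstar oc s top)" using kernel[OF s] by blast
  qed
  then have "\<And>w. t w = (foulis_br oc s \<circ> t) w"
    unfolding foulis_br_def comp_def using sasaki_fix by metis
  then have "t = foulis_br oc s \<circ> t" by (rule ext)
  then show "\<exists>r\<in>Lin oc. t = foulis_br oc s \<circ> r" using t by blast
next
  assume s: "s \<in> Lin oc" and "\<exists>r\<in>Lin oc. t = foulis_br oc s \<circ> r"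
  then obtain r where r: "t = foulis_br oc s \<circ> r" by blast
  have "\<And>w. s (t w) = bot"
  proof -
    fix w
    have "t w \<le> oc (lstar oc s top)" unfolding r foulis_br_def comp_def by (rule sasaki_le)
    then show "s (t w) = bot" using kernel[OF s] by blast
  qed
  then show "s \<circ> t = (\<lambda>_. bot)" by (simp add: fun_eq_iff)
qed

lemma main:
  shows "foulis_quantale_on (Lin oc) pw_le (\<circ>) id (lstar oc) (foulis_br oc)
         \<and> foulis_br oc id = (\<lambda>_. bot)
         \<and> (\<forall>s\<in>Lin oc. \<forall>t\<in>Lin oc.
               s \<circ> t = (\<lambda>_. bot) \<longleftrightarrow> (\<exists>r\<in>Lin oc. t = foulis_br oc s \<circ> r))"
proof -
  have brid: "foulis_br oc id = (\<lambda>_. bot)"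
    unfolding foulis_br_def sasaki_def by (simp add: lstar_id)
  have cl: "complete_lattice_on (Lin oc) pw_le"
    unfolding complete_lattice_on_def
  proof (intro conjI ballI allI impI)
    fix S assume "S \<subseteq> Lin oc"
    then show "\<exists>s. is_lub pw_le (Lin oc) S s" using is_lub_iff by blast
  next
    fix a b assume "a \<in> Lin oc" "b \<in> Lin oc" "pw_le a b \<and> pw_le b a"
    then show "a = b" unfolding pw_le_def by (simp add: fun_eq_iff antisym)
  next
    fix a b c assume "a \<in> Lin oc" "b \<in> Lin oc" "c \<in> Lin oc" "pw_le a b \<and> pw_le b c"
    then show "pw_le a c" unfolding pw_le_def by (meson order_trans)
  qed (simp add: pw_le_def)
  have q: "quantale_on (Lin oc) pw_le (\<circ>)"
    unfolding quantale_on_def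
  proof (intro conjI ballI allI impI)
    fix a S s assume a: "a \<in> Lin oc" and S: "S \<subseteq> Lin oc" and l: "is_lub pw_le (Lin oc) S s"
    then have s: "s = psup S" using is_lub_iff by blast
    have S1: "(\<lambda>x. a \<circ> x) ` S \<subseteq> Lin oc" using a S Lin_comp by blast
    have S2: "(\<lambda>x. x \<circ> a) ` S \<subseteq> Lin oc" using a S Lin_comp by blast
    have e1: "a \<circ> s = psup ((\<lambda>x. a \<circ> x) ` S)"
      unfolding s psup_def by (simp add: fun_eq_iff Lin_Sup[OF a] image_image)
    have e2: "s \<circ> a = psup ((\<lambda>x. x \<circ> a) ` S)"
      unfolding s psup_def by (simp add: fun_eq_iff image_image)
    show "is_lub pw_le (Lin oc) ((\<lambda>x. a \<circ> x) ` S) (a \<circ> s)"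
      using is_lub_iff[OF S1] e1 by blast
    show "is_lub pw_le (Lin oc) ((\<lambda>x. x \<circ> a) ` S) (s \<circ> a)"
      using is_lub_iff[OF S2] e2 by blast
  qed (auto simp: cl Lin_comp)
  have u: "unital_involutive_quantale_on (Lin oc) pw_le (\<circ>) id (lstar oc)"
    unfolding unital_involutive_quantale_on_def
  proof (intro conjI ballI allI impI)
    fix S s assume S: "S \<subseteq> Lin oc" and l: "is_lub pw_le (Lin oc) S s"
    then have s: "s = psup S" using is_lub_iff by blast
    have S1: "lstar oc ` S \<subseteq> Lin oc" using S lstar_Lin by blast
    show "is_lub pw_le (Lin oc) (lstar oc ` S) (lstar oc s)"
      using is_lub_iff[OF S1] lstar_psup[OF S] s by blast
  qed (auto simp: q id_Lin lstar_Lin lstar_lstar lstar_comp)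
  have f: "foulis_quantale_on (Lin oc) pw_le (\<circ>) id (lstar oc) (foulis_br oc)"
    unfolding foulis_quantale_on_def
  proof (intro conjI ballI)
    show "is_lub pw_le (Lin oc) {} (foulis_br oc id)"
      using lub_empty zero_Lin brid by simp
    fix s assume s: "s \<in> Lin oc"
    show "foulis_br oc s \<in> Lin oc" unfolding foulis_br_def by (rule sasaki_Lin)
    show "foulis_br oc s \<circ> foulis_br oc s = foulis_br oc s"
      unfolding foulis_br_def by (rule sasaki_idem)
    show "lstar oc (foulis_br oc s) = foulis_br oc s"
      unfolding foulis_br_def using sasaki_adj lstar_eq by blast
    fix x assume x: "x \<in> Lin oc"
    show "is_lub pw_le (Lin oc) {} (s \<circ> x) = (\<exists>y\<in>Lin oc. x = foulis_br oc s \<circ> y)"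
      using lub_empty[OF Lin_comp[OF s x]] cond_c[OF s x] by simp
  qed (rule u)
  show ?thesis using cond_c by (intro conjI f brid ballI) blast
qed

end

theorem mainTheorem4:
  fixes oc :: "'a::complete_lattice \<Rightarrow> 'a"
  assumes "complete_oml oc"
  shows "foulis_quantale_on (Lin oc) pw_le (\<circ>) id (lstar oc) (foulis_br oc)
         \<and> foulis_br oc id = (\<lambda>_. bot)
         \<and> (\<forall>s\<in>Lin oc. \<forall>t\<in>Lin oc.
               s \<circ> t = (\<lambda>_. bot) \<longleftrightarrow> (\<exists>r\<in>Lin oc. t = foulis_br oc s \<circ> r))"
  using cOML.main[OF cOML.intro[OF assms]] .

end
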